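(* Let $(\mathbf X,\mathbf Y)$ be a general correlated source such that $\{\frac1n\log\frac1{P_{X^n|Y^n}(X^n|Y^n)}\}_{n\ge1}$ satisfies Condition (W). Then for any $0<\varepsilon\le1$, $\{\frac1n\overline h^\varepsilon(X^n)\}_{n\ge1}$ also satisfies Condition (W).
   Context: A general correlated source $(\mathbf X,\mathbf Y)=\{(X^n,Y^n)\}_{n\ge1}$ is an arbitrary sequence of pairs of random variables on $\mathcal X^n\times\mathcal Y^n$, $\mathcal X,\mathcal Y$ finite or countably infinite (no structural assumptions; marginal probabilities positive). Logs base 2. For $x^n\in\mathcal X^n$ and $\varepsilon\in(0,1]$: $\overline h^\varepsilon(x^n)=\inf\{a\in\mathbb R:\sum_{y^n:\log(1/P_{X^n|Y^n}(x^n|y^n))>a}P_{Y^n|X^n}(y^n|x^n)\le\varepsilon\}$. A sequence of discrete real random variables $\{Z_n\}$ satisfies Condition (W) if: (i) there is $M<\infty$ with $\mathbb E[Z_n]<M$ for all $n$; and (ii) whenever events $\mathcal A_n$ satisfy $\Pr(\mathcal A_n)\to0$, then $\lim_n\mathbb E[|Z_n|\mathbf 1_{\mathcal A_n}]=0$. *)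

theory Defs
  imports "HOL-Probability.Probability"
begin

text \<open>A general correlated source: for each n a joint distribution P n of (X^n, Y^n),
  where X^n, Y^n are words (lists) of length n over countable alphabets.\<close>

definition corr_source :: "(nat \<Rightarrow> ('a::countable list \<times> 'b::countable list) pmf) \<Rightarrow> bool" where
  "corr_source P \<longleftrightarrow> (\<forall>n. set_pmf (P n) \<subseteq> {(x, y). length x = n \<and> length y = n})"

definition PX :: "(nat \<Rightarrow> ('a \<times> 'b) pmf) \<Rightarrow> nat \<Rightarrow> 'a \<Rightarrow> real" where
  "PX P n x = pmf (map_pmf fst (P n)) x"

definition PY :: "(nat \<Rightarrow> ('a \<times> 'b) pmf) \<Rightarrow> nat \<Rightarrow> 'b \<Rightarrow> real" where
  "PY P n y = pmf (map_pmf snd (P n)) y"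

definition cond_XY :: "(nat \<Rightarrow> ('a \<times> 'b) pmf) \<Rightarrow> nat \<Rightarrow> 'a \<Rightarrow> 'b \<Rightarrow> real" where
  "cond_XY P n x y = pmf (P n) (x, y) / PY P n y"

definition cond_YX :: "(nat \<Rightarrow> ('a \<times> 'b) pmf) \<Rightarrow> nat \<Rightarrow> 'b \<Rightarrow> 'a \<Rightarrow> real" where
  "cond_YX P n y x = pmf (P n) (x, y) / PX P n x"

text \<open>The quantity overline-h^eps(x^n). The infimum is taken over a \<ge> 0
  (for eps < 1 this agrees with the infimum over all reals).\<close>
definition hbar :: "(nat \<Rightarrow> ('a \<times> 'b) pmf) \<Rightarrow> real \<Rightarrow> nat \<Rightarrow> 'a \<Rightarrow> real" where
  "hbar P eps n x = Inf {a. 0 \<le> a \<and>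
     (\<Sum>\<^sub>\<infinity> y \<in> {y. log 2 (1 / cond_XY P n x y) > a}. cond_YX P n y x) \<le> eps}"

definition condW :: "(nat \<Rightarrow> 'c measure) \<Rightarrow> (nat \<Rightarrow> 'c \<Rightarrow> real) \<Rightarrow> bool" where
  "condW M Z \<longleftrightarrow>
     (\<exists>B. \<forall>n\<ge>1. integrable (M n) (Z n) \<and> (\<integral>w. Z n w \<partial>M n) < B) \<and>
     (\<forall>A. (\<forall>n\<ge>1. A n \<in> sets (M n)) \<longrightarrow> (\<lambda>n. measure (M n) (A n)) \<longlonglongrightarrow> 0 \<longrightarrow>
        (\<lambda>n. \<integral>w. \<bar>Z n w\<bar> * indicator (A n) w \<partial>M n) \<longlonglongrightarrow> 0)"

end

theory Submission
  imports Defs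
begin

lemma pmf_le_PY: "pmf (P n) (x, y) \<le> PY P n y"
proof -
  have "pmf (P n) (x, y) = measure (measure_pmf (P n)) {(x,y)}" by (simp add: measure_pmf_single)
  also have "\<dots> \<le> measure (measure_pmf (P n)) (snd -` {y})"
    by (rule measure_pmf.finite_measure_mono) auto
  finally show ?thesis by (simp add: PY_def pmf_map)
qed

lemma W_nonneg:
  assumes "pmf (P n) (x, y) > 0"
  shows "0 \<le> log 2 (1 / cond_XY P n x y)"
proof -
  have py: "pmf (P n) (x, y) \<le> PY P n y" by (rule pmf_le_PY)
  with assms have "PY P n y > 0" by linarith
  hence c: "cond_XY P n x y > 0" "cond_XY P n x y \<le> 1"
    using assms py by (auto simp: cond_XY_def)
  hence "1 / cond_XY P n x y \<ge> 1" by simp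
  thus ?thesis using c by (subst zero_le_log_cancel_iff) auto
qed

lemma PX_nn: "ennreal (PX P n x) = (\<integral>\<^sup>+ y. ennreal (pmf (P n) (x, y)) \<partial>count_space UNIV)"
proof -
  have "(\<integral>\<^sup>+ y. ennreal (pmf (P n) (x, y)) \<partial>count_space UNIV) = emeasure (measure_pmf (P n)) (Pair x ` UNIV)"
    by (rule nn_integral_pmf') (auto simp: inj_on_def)
  also have "Pair x ` UNIV = fst -` {x}" by auto
  finally show ?thesis by (simp add: PX_def pmf_map measure_pmf.emeasure_eq_measure)
qed

lemma PX_nonneg: "0 \<le> PX P n x" by (simp add: PX_def)

lemma disint:
  "(\<integral>\<^sup>+ z. f z \<partial>measure_pmf p) =
   (\<integral>\<^sup>+ x. \<integral>\<^sup>+ y. ennreal (pmf p (x, y)) * f (x, y) \<partial>count_space UNIV \<partial>count_space UNIV)"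
  using nn_integral_fst_count_space[of "\<lambda>z. ennreal (pmf p z) * f z"]
  by (simp add: nn_integral_measure_pmf)

lemma infsum_nn:
  fixes f :: "'a \<Rightarrow> real"
  assumes "f summable_on A" "\<And>x. x \<in> A \<Longrightarrow> 0 \<le> f x"
  shows "ennreal (infsum f A) = (\<integral>\<^sup>+ x. ennreal (f x) \<partial>count_space A)"
proof -
  have "Infinite_Set_Sum.abs_summable_on f A"
    using assms abs_summable_equivalent summable_on_iff_abs_summable_on_real by blast
  thus ?thesis using assms
    by (simp add: nn_integral_conv_infsetsum infsetsum_infsum)
qed

lemma ennreal_mult_c: "0 \<le> c \<Longrightarrow> ennreal c * ennreal w = ennreal (c * w)"
  by (cases "0 \<le> w") (auto simp: ennreal_mult ennreal_neg mult_nonneg_nonpos)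

lemma hbar_set_ne:
  assumes "0 < eps"
  shows "\<exists>a. 0 \<le> a \<and> (\<Sum>\<^sub>\<infinity> y \<in> {y. log 2 (1 / cond_XY P n x y) > a}. cond_YX P n y x) \<le> eps"
proof (cases "PX P n x = 0")
  case True
  hence "\<And>y. cond_YX P n y x = 0" by (simp add: cond_YX_def)
  thus ?thesis using assms by (intro exI[of _ 0]) simp
next
  case False
  hence PXpos: "PX P n x > 0" using PX_nonneg[of P n x] by linarith
  define T where "T m = {y. log 2 (1 / cond_XY P n x y) > real m}" for m :: nat
  define E where "E m = Pair x ` T m" for m
  have dec: "decseq E" unfolding decseq_def E_def T_def by force
  have inter: "(\<Inter>m. E m) = {}"
  proof (rule ccontr)
    assume "(\<Inter>m. E m) \<noteq> {}"
    then obtain z where z: "\<And>m. z \<in> E m" by blast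
    obtain k :: nat where k: "log 2 (1 / cond_XY P n x (snd z)) < real k"
      using reals_Archimedean2 by blast
    from z[of k] have "z \<in> E k" .
    thus False using k unfolding E_def T_def by auto
  qed
  have "(\<lambda>m. emeasure (measure_pmf (P n)) (E m)) \<longlonglongrightarrow> emeasure (measure_pmf (P n)) (\<Inter>m. E m)"
    using dec by (intro Lim_emeasure_decseq) (auto simp: measure_pmf.emeasure_finite)
  hence lim: "(\<lambda>m. emeasure (measure_pmf (P n)) (E m)) \<longlonglongrightarrow> 0" using inter by simp
  have "0 < ennreal (eps * PX P n x)" using assms PXpos by simp
  from order_tendstoD(2)[OF lim this] obtain m where
    m: "emeasure (measure_pmf (P n)) (E m) < ennreal (eps * PX P n x)"
    by (auto simp: eventually_sequentially)
  show ?thesis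
  proof (rule exI[of _ "real m"], intro conjI)
    show "0 \<le> real m" by simp
    show "(\<Sum>\<^sub>\<infinity> y \<in> {y. log 2 (1 / cond_XY P n x y) > real m}. cond_YX P n y x) \<le> eps"
    proof (cases "(\<lambda>y. cond_YX P n y x) summable_on T m")
      case False
      thus ?thesis using assms by (simp add: infsum_not_exists T_def)
    next
      case True
      have "ennreal (\<Sum>\<^sub>\<infinity> y \<in> T m. cond_YX P n y x)
          = (\<integral>\<^sup>+ y. ennreal (cond_YX P n y x) \<partial>count_space (T m))"
        using True PXpos by (intro infsum_nn) (auto simp: cond_YX_def)
      also have "\<dots> = (\<integral>\<^sup>+ y. ennreal (1 / PX P n x) * ennreal (pmf (P n) (x, y)) \<partial>count_space (T m))"
        using PXpos by (intro nn_integral_cong) (auto simp: cond_YX_def ennreal_mult[symmetric])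
      also have "\<dots> = ennreal (1 / PX P n x) * (\<integral>\<^sup>+ y. ennreal (pmf (P n) (x, y)) \<partial>count_space (T m))"
        by (rule nn_integral_cmult) simp
      also have "(\<integral>\<^sup>+ y. ennreal (pmf (P n) (x, y)) \<partial>count_space (T m)) = emeasure (measure_pmf (P n)) (E m)"
        unfolding E_def by (rule nn_integral_pmf') (auto simp: inj_on_def)
      also have "ennreal (1 / PX P n x) * emeasure (measure_pmf (P n)) (E m) \<le> ennreal (1 / PX P n x) * ennreal (eps * PX P n x)"
        using m by (intro mult_left_mono) auto
      also have "\<dots> = ennreal eps"
        using PXpos assms by (simp add: ennreal_mult[symmetric])
      finally show ?thesis using assms by (simp add: T_def ennreal_le_iff)
    qed
  qed
qed

lemma hbar_nonneg:
  assumes "0 < eps"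
  shows "0 \<le> hbar P eps n x"
  unfolding hbar_def using hbar_set_ne[OF assms, of P n x]
  by (intro cInf_greatest) auto

lemma KX:
  assumes eps: "0 < eps"
  shows "ennreal eps * ennreal (hbar P eps n x) * ennreal (PX P n x) \<le>
    (\<integral>\<^sup>+ y. ennreal (pmf (P n) (x, y)) * ennreal (log 2 (1 / cond_XY P n x y)) \<partial>count_space UNIV)"
    (is "?L \<le> ?R")
proof -
  define h where "h = hbar P eps n x"
  define S where "S = {a. 0 \<le> a \<and>
     (\<Sum>\<^sub>\<infinity> y \<in> {y. log 2 (1 / cond_XY P n x y) > a}. cond_YX P n y x) \<le> eps}"
  have hS: "h = Inf S" unfolding h_def S_def hbar_def by simp
  have bdd: "bdd_below S" unfolding S_def by (auto intro: bdd_belowI[of _ 0])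
  show ?thesis
  proof (cases "PX P n x = 0 \<or> h \<le> 0 \<or> ?R = \<top>")
    case True
    thus ?thesis using hbar_nonneg[OF eps, of P n x] by (auto simp: h_def)
  next
    case False
    hence PXpos: "PX P n x > 0" and hpos: "h > 0" and Rfin: "?R \<noteq> \<top>"
      using PX_nonneg[of P n x] by auto
    obtain r where r: "0 \<le> r" "?R = ennreal r" using Rfin ennreal_cases[of ?R] by auto
    have key: "eps * a * PX P n x \<le> r" if a: "0 \<le> a" "a < h" for a
    proof -
      define T where "T = {y. log 2 (1 / cond_XY P n x y) > a}"
      define tl where "tl = (\<Sum>\<^sub>\<infinity> y \<in> T. cond_YX P n y x)"
      have "a \<notin> S"
      proof
        assume "a \<in> S"
        hence "Inf S \<le> a" using bdd by (rule cInf_lower)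
        thus False using a hS by simp
      qed
      hence tl: "tl > eps" using a unfolding S_def tl_def T_def by auto
      have summ: "(\<lambda>y. cond_YX P n y x) summable_on T"
        using tl eps infsum_not_exists unfolding tl_def by fastforce
      have "ennreal tl = (\<integral>\<^sup>+ y. ennreal (cond_YX P n y x) \<partial>count_space T)"
        unfolding tl_def using summ PXpos by (intro infsum_nn) (auto simp: cond_YX_def)
      also have "\<dots> = (\<integral>\<^sup>+ y. ennreal (1 / PX P n x) * ennreal (pmf (P n) (x, y)) \<partial>count_space T)"
        using PXpos by (intro nn_integral_cong) (auto simp: cond_YX_def ennreal_mult[symmetric])
      also have "\<dots> = ennreal (1 / PX P n x) * (\<integral>\<^sup>+ y. ennreal (pmf (P n) (x, y)) \<partial>count_space T)"
        by (rule nn_integral_cmult) simp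
      finally have tleq: "ennreal tl = ennreal (1 / PX P n x) * (\<integral>\<^sup>+ y. ennreal (pmf (P n) (x, y)) \<partial>count_space T)" .
      have "ennreal (eps * a * PX P n x) \<le> ennreal (tl * a * PX P n x)"
        using tl a PXpos by (intro ennreal_leI mult_right_mono) auto
      also have "\<dots> = ennreal (a * PX P n x) * ennreal tl"
        using tl a PXpos eps by (simp add: ennreal_mult[symmetric] mult_ac)
      also have "\<dots> = ennreal a * (\<integral>\<^sup>+ y. ennreal (pmf (P n) (x, y)) \<partial>count_space T)"
        using PXpos a by (simp add: tleq ennreal_mult[symmetric] mult.assoc[symmetric])
      also have "\<dots> = ennreal a * (\<integral>\<^sup>+ y. ennreal (pmf (P n) (x, y)) * indicator T y \<partial>count_space UNIV)"
        by (simp add: nn_integral_count_space_indicator)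
      also have "\<dots> = (\<integral>\<^sup>+ y. ennreal a * (ennreal (pmf (P n) (x, y)) * indicator T y) \<partial>count_space UNIV)"
        by (rule nn_integral_cmult[symmetric]) simp
      also have "\<dots> \<le> ?R"
      proof (intro nn_integral_mono)
        fix y
        show "ennreal a * (ennreal (pmf (P n) (x, y)) * indicator T y) \<le>
          ennreal (pmf (P n) (x, y)) * ennreal (log 2 (1 / cond_XY P n x y))"
        proof (cases "y \<in> T")
          case True
          hence "a \<le> log 2 (1 / cond_XY P n x y)" unfolding T_def by simp
          hence "ennreal a \<le> ennreal (log 2 (1 / cond_XY P n x y))" by (rule ennreal_leI)
          hence "ennreal a * ennreal (pmf (P n) (x, y)) \<le> ennreal (log 2 (1 / cond_XY P n x y)) * ennreal (pmf (P n) (x, y))"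
            by (rule mult_right_mono) simp
          thus ?thesis using True by (simp add: mult.commute)
        qed simp
      qed
      finally show ?thesis using r by (simp add: ennreal_le_iff)
    qed
    have "eps * h * PX P n x \<le> r"
    proof (rule ccontr)
      assume "\<not> ?thesis"
      hence lt: "r < eps * h * PX P n x" by simp
      define c where "c = eps * PX P n x"
      have c: "c > 0" using eps PXpos by (simp add: c_def)
      define a where "a = (r / c + h) / 2"
      have "r / c < h" using lt c by (simp add: c_def divide_less_eq mult_ac)
      moreover have "0 \<le> r / c" using r c by simp
      moreover have "\<And>q. 0 \<le> q \<Longrightarrow> q < h \<Longrightarrow> 0 \<le> (q + h) / 2 \<and> (q + h) / 2 < h \<and> q < (q + h) / 2"
        by auto
      ultimately have a1: "0 \<le> a" "a < h" "r / c < a" unfolding a_def by blast+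
      have "r < c * a" using a1(3) c by (simp add: divide_less_eq mult.commute)
      moreover have "eps * a * PX P n x \<le> r" using key a1 by simp
      ultimately show False by (simp add: c_def mult_ac)
    qed
    hence "ennreal (eps * h * PX P n x) \<le> ?R" using r by (simp add: ennreal_leI)
    thus ?thesis using eps PXpos hpos by (simp add: h_def ennreal_mult[symmetric])
  qed
qed

lemma KXc:
  assumes eps: "0 < eps" and c: "0 \<le> c"
  shows "ennreal eps * (ennreal (c * hbar P eps n x) * ennreal (PX P n x)) \<le>
    (\<integral>\<^sup>+ y. ennreal (pmf (P n) (x, y)) * ennreal \<bar>c * log 2 (1 / cond_XY P n x y)\<bar> \<partial>count_space UNIV)"
proof -
  have "ennreal eps * (ennreal (c * hbar P eps n x) * ennreal (PX P n x))
      = ennreal c * (ennreal eps * ennreal (hbar P eps n x) * ennreal (PX P n x))"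
    using c hbar_nonneg[OF eps, of P n x] by (simp add: ennreal_mult mult_ac)
  also have "\<dots> \<le> ennreal c * (\<integral>\<^sup>+ y. ennreal (pmf (P n) (x, y)) * ennreal (log 2 (1 / cond_XY P n x y)) \<partial>count_space UNIV)"
    by (intro mult_left_mono KX eps) simp
  also have "\<dots> = (\<integral>\<^sup>+ y. ennreal c * (ennreal (pmf (P n) (x, y)) * ennreal (log 2 (1 / cond_XY P n x y))) \<partial>count_space UNIV)"
    by (rule nn_integral_cmult[symmetric]) simp
  also have "\<dots> \<le> (\<integral>\<^sup>+ y. ennreal (pmf (P n) (x, y)) * ennreal \<bar>c * log 2 (1 / cond_XY P n x y)\<bar> \<partial>count_space UNIV)"
  proof (intro nn_integral_mono)
    fix y
    have "ennreal c * ennreal (log 2 (1 / cond_XY P n x y)) = ennreal (c * log 2 (1 / cond_XY P n x y))"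
      using c by (rule ennreal_mult_c)
    also have "\<dots> \<le> ennreal \<bar>c * log 2 (1 / cond_XY P n x y)\<bar>" by (intro ennreal_leI) simp
    finally have "ennreal c * ennreal (log 2 (1 / cond_XY P n x y)) \<le> ennreal \<bar>c * log 2 (1 / cond_XY P n x y)\<bar>" .
    hence "ennreal (pmf (P n) (x, y)) * (ennreal c * ennreal (log 2 (1 / cond_XY P n x y))) \<le>
       ennreal (pmf (P n) (x, y)) * ennreal \<bar>c * log 2 (1 / cond_XY P n x y)\<bar>"
      by (rule mult_left_mono) simp
    thus "ennreal c * (ennreal (pmf (P n) (x, y)) * ennreal (log 2 (1 / cond_XY P n x y))) \<le>
       ennreal (pmf (P n) (x, y)) * ennreal \<bar>c * log 2 (1 / cond_XY P n x y)\<bar>"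
      by (simp add: mult_ac)
  qed
  finally show ?thesis .
qed

lemma inner_const:
  "(\<integral>\<^sup>+ y. ennreal (pmf (P n) (x, y)) * K \<partial>count_space UNIV) = K * ennreal (PX P n x)"
  by (simp add: PX_nn nn_integral_multc mult.commute[of K])

lemma KS:
  assumes eps: "0 < eps" and c: "0 \<le> c"
  shows "ennreal eps * (\<integral>\<^sup>+ z. ennreal (c * hbar P eps n (fst z)) * indicator S (fst z) \<partial>measure_pmf (P n))
    \<le> (\<integral>\<^sup>+ z. ennreal (\<bar>c * log 2 (1 / cond_XY P n (fst z) (snd z))\<bar> * indicator S (fst z)) \<partial>measure_pmf (P n))"
proof -
  have "ennreal eps * (\<integral>\<^sup>+ z. ennreal (c * hbar P eps n (fst z)) * indicator S (fst z) \<partial>measure_pmf (P n))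
     = ennreal eps * (\<integral>\<^sup>+ x. ennreal (c * hbar P eps n x) * indicator S x * ennreal (PX P n x) \<partial>count_space UNIV)"
    by (simp add: disint inner_const)
  also have "\<dots> = (\<integral>\<^sup>+ x. ennreal eps * (ennreal (c * hbar P eps n x) * indicator S x * ennreal (PX P n x)) \<partial>count_space UNIV)"
    by (rule nn_integral_cmult[symmetric]) simp
  also have "\<dots> \<le> (\<integral>\<^sup>+ x. \<integral>\<^sup>+ y. ennreal (pmf (P n) (x, y)) * ennreal (\<bar>c * log 2 (1 / cond_XY P n x y)\<bar> * indicator S x) \<partial>count_space UNIV \<partial>count_space UNIV)"
  proof (intro nn_integral_mono)
    fix x
    show "ennreal eps * (ennreal (c * hbar P eps n x) * indicator S x * ennreal (PX P n x)) \<le>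
      (\<integral>\<^sup>+ y. ennreal (pmf (P n) (x, y)) * ennreal (\<bar>c * log 2 (1 / cond_XY P n x y)\<bar> * indicator S x) \<partial>count_space UNIV)"
    proof (cases "x \<in> S")
      case True
      thus ?thesis using KXc[OF eps c, of P n x] by simp
    qed simp
  qed
  also have "\<dots> = (\<integral>\<^sup>+ z. ennreal (\<bar>c * log 2 (1 / cond_XY P n (fst z) (snd z))\<bar> * indicator S (fst z)) \<partial>measure_pmf (P n))"
    by (simp add: disint)
  finally show ?thesis .
qed

definition qA :: "(nat \<Rightarrow> ('a \<times> 'b) pmf) \<Rightarrow> nat \<Rightarrow> ('a \<times> 'b) set \<Rightarrow> 'a \<Rightarrow> ennreal" where
  "qA P n A x = (\<integral>\<^sup>+ y. ennreal (pmf (P n) (x, y)) * indicator A (x, y) \<partial>count_space UNIV)"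

lemma qA_le: "qA P n A x \<le> ennreal (PX P n x)"
  unfolding qA_def PX_nn by (intro nn_integral_mono) (simp add: indicator_def)

lemma disint_g:
  "(\<integral>\<^sup>+ z. g (fst z) * indicator A z \<partial>measure_pmf (P n)) = (\<integral>\<^sup>+ x. g x * qA P n A x \<partial>count_space UNIV)"
proof -
  have "(\<integral>\<^sup>+ z. g (fst z) * indicator A z \<partial>measure_pmf (P n)) =
     (\<integral>\<^sup>+ x. \<integral>\<^sup>+ y. g x * (ennreal (pmf (P n) (x, y)) * indicator A (x, y)) \<partial>count_space UNIV \<partial>count_space UNIV)"
    by (simp add: disint mult_ac)
  also have "\<dots> = (\<integral>\<^sup>+ x. g x * qA P n A x \<partial>count_space UNIV)"
    unfolding qA_def by (intro nn_integral_cong nn_integral_cmult) simp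
  finally show ?thesis .
qed

lemma split_lemma:
  fixes P :: "nat \<Rightarrow> ('a \<times> 'b) pmf" and n :: nat and A :: "('a \<times> 'b) set"
  assumes d: "0 < \<delta>"
  defines "B \<equiv> {x. ennreal \<delta> * ennreal (PX P n x) < qA P n A x}"
  shows "(\<integral>\<^sup>+ z. g (fst z) * indicator A z \<partial>measure_pmf (P n)) \<le>
     (\<integral>\<^sup>+ z. g (fst z) * indicator B (fst z) \<partial>measure_pmf (P n)) + ennreal \<delta> * (\<integral>\<^sup>+ z. g (fst z) \<partial>measure_pmf (P n))"
proof -
  have e1: "(\<integral>\<^sup>+ z. g (fst z) * indicator B (fst z) \<partial>measure_pmf (P n)) =
     (\<integral>\<^sup>+ x. g x * indicator B x * ennreal (PX P n x) \<partial>count_space UNIV)"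
    by (simp add: disint inner_const)
  have e2: "(\<integral>\<^sup>+ z. g (fst z) \<partial>measure_pmf (P n)) =
     (\<integral>\<^sup>+ x. g x * ennreal (PX P n x) \<partial>count_space UNIV)"
    by (simp add: disint inner_const)
  have "(\<integral>\<^sup>+ z. g (fst z) * indicator A z \<partial>measure_pmf (P n)) = (\<integral>\<^sup>+ x. g x * qA P n A x \<partial>count_space UNIV)"
    by (rule disint_g)
  also have "\<dots> \<le> (\<integral>\<^sup>+ x. g x * indicator B x * ennreal (PX P n x) + ennreal \<delta> * (g x * ennreal (PX P n x)) \<partial>count_space UNIV)"
  proof (intro nn_integral_mono)
    fix x
    show "g x * qA P n A x \<le> g x * indicator B x * ennreal (PX P n x) + ennreal \<delta> * (g x * ennreal (PX P n x))"
    proof (cases "x \<in> B")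
      case True
      have "g x * qA P n A x \<le> g x * ennreal (PX P n x)" by (intro mult_left_mono qA_le) simp
      also have "\<dots> \<le> g x * indicator B x * ennreal (PX P n x) + ennreal \<delta> * (g x * ennreal (PX P n x))"
        using True by simp
      finally show ?thesis .
    next
      case False
      hence "qA P n A x \<le> ennreal \<delta> * ennreal (PX P n x)" unfolding B_def by (simp add: not_less)
      hence "g x * qA P n A x \<le> g x * (ennreal \<delta> * ennreal (PX P n x))" by (rule mult_left_mono) simp
      thus ?thesis using False by (simp add: mult_ac)
    qed
  qed
  also have "\<dots> = (\<integral>\<^sup>+ x. g x * indicator B x * ennreal (PX P n x) \<partial>count_space UNIV) +
       (\<integral>\<^sup>+ x. ennreal \<delta> * (g x * ennreal (PX P n x)) \<partial>count_space UNIV)"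
    by (rule nn_integral_add) simp_all
  also have "(\<integral>\<^sup>+ x. ennreal \<delta> * (g x * ennreal (PX P n x)) \<partial>count_space UNIV) =
       ennreal \<delta> * (\<integral>\<^sup>+ x. g x * ennreal (PX P n x) \<partial>count_space UNIV)"
    by (rule nn_integral_cmult) simp
  finally show ?thesis by (simp add: e1 e2)
qed

lemma markov_lemma:
  fixes P :: "nat \<Rightarrow> ('a \<times> 'b) pmf" and n :: nat and A :: "('a \<times> 'b) set"
  assumes d: "0 < \<delta>"
  defines "B \<equiv> {x. ennreal \<delta> * ennreal (PX P n x) < qA P n A x}"
  shows "ennreal \<delta> * emeasure (measure_pmf (P n)) (fst -` B) \<le> emeasure (measure_pmf (P n)) A"
proof -
  have "emeasure (measure_pmf (P n)) (fst -` B) = (\<integral>\<^sup>+ z. indicator B (fst z) \<partial>measure_pmf (P n))"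
  proof -
    have eq: "(\<lambda>z. indicator B (fst z) :: ennreal) = indicator (fst -` B)" by (auto simp: indicator_def)
    show ?thesis unfolding eq by (rule nn_integral_indicator[symmetric]) simp
  qed
  also have "\<dots> = (\<integral>\<^sup>+ x. indicator B x * ennreal (PX P n x) \<partial>count_space UNIV)"
    by (simp add: disint inner_const)
  finally have e1: "emeasure (measure_pmf (P n)) (fst -` B) = (\<integral>\<^sup>+ x. indicator B x * ennreal (PX P n x) \<partial>count_space UNIV)" .
  have "emeasure (measure_pmf (P n)) A = (\<integral>\<^sup>+ z. (\<lambda>_. 1) (fst z) * indicator A z \<partial>measure_pmf (P n))"
    by (subst nn_integral_indicator[symmetric]) auto
  also have "\<dots> = (\<integral>\<^sup>+ x. 1 * qA P n A x \<partial>count_space UNIV)" by (rule disint_g)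
  finally have e2: "emeasure (measure_pmf (P n)) A = (\<integral>\<^sup>+ x. qA P n A x \<partial>count_space UNIV)" by simp
  have "ennreal \<delta> * emeasure (measure_pmf (P n)) (fst -` B) = (\<integral>\<^sup>+ x. ennreal \<delta> * (indicator B x * ennreal (PX P n x)) \<partial>count_space UNIV)"
    unfolding e1 by (rule nn_integral_cmult[symmetric]) simp
  also have "\<dots> \<le> (\<integral>\<^sup>+ x. qA P n A x \<partial>count_space UNIV)"
  proof (intro nn_integral_mono)
    fix x show "ennreal \<delta> * (indicator B x * ennreal (PX P n x)) \<le> qA P n A x"
      by (cases "x \<in> B") (auto simp: B_def less_imp_le)
  qed
  finally show ?thesis by (simp add: e2)
qed

theorem lemma2:
  fixes P :: "nat \<Rightarrow> ('a::countable list \<times> 'b::countable list) pmf"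
    and eps :: real
  assumes "corr_source P"
    and "condW (\<lambda>n. measure_pmf (P n))
               (\<lambda>n (x, y). (1 / real n) * log 2 (1 / cond_XY P n x y))"
    and "0 < eps" and "eps \<le> 1"
  shows "condW (\<lambda>n. measure_pmf (P n)) (\<lambda>n (x, y). (1 / real n) * hbar P eps n x)"
proof -
  have eps: "0 < eps" by fact
  define Zf where "Zf n z = (1 / real n) * log 2 (1 / cond_XY P n (fst z) (snd z))" for n and z :: "'a list \<times> 'b list"
  define Hf where "Hf n z = (1 / real n) * hbar P eps n (fst z)" for n and z :: "'a list \<times> 'b list"
  have eqZ: "(\<lambda>n (x, y). (1 / real n) * log 2 (1 / cond_XY P n x y)) = Zf"
    by (auto simp: Zf_def fun_eq_iff)
  have eqH: "(\<lambda>n (x, y). (1 / real n) * hbar P eps n x) = Hf"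
    by (auto simp: Hf_def fun_eq_iff)
  from assms(2) obtain Bd where
    hB: "\<And>n. n \<ge> 1 \<Longrightarrow> integrable (measure_pmf (P n)) (Zf n) \<and> (\<integral>w. Zf n w \<partial>measure_pmf (P n)) < Bd"
    and hA: "\<And>A. (\<forall>n\<ge>1. A n \<in> sets (measure_pmf (P n))) \<Longrightarrow>
        (\<lambda>n. measure (measure_pmf (P n)) (A n)) \<longlonglongrightarrow> 0 \<Longrightarrow>
        (\<lambda>n. \<integral>w. \<bar>Zf n w\<bar> * indicator (A n) w \<partial>measure_pmf (P n)) \<longlonglongrightarrow> 0"
    unfolding condW_def eqZ by blast
  have Hnn: "0 \<le> Hf n z" for n z using hbar_nonneg[OF eps, of P n "fst z"] by (simp add: Hf_def)
  have ZAE: "AE z in measure_pmf (P n). 0 \<le> Zf n z" for n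
  proof (rule AE_pmfI)
    fix z assume "z \<in> set_pmf (P n)"
    hence "pmf (P n) (fst z, snd z) > 0" by (simp add: set_pmf_iff pmf_positive)
    thus "0 \<le> Zf n z" unfolding Zf_def by (intro mult_nonneg_nonneg W_nonneg) auto
  qed
  have Zint: "(\<integral>\<^sup>+ z. ennreal \<bar>Zf n z\<bar> \<partial>measure_pmf (P n)) = ennreal (\<integral>w. Zf n w \<partial>measure_pmf (P n))"
    and Zint0: "0 \<le> (\<integral>w. Zf n w \<partial>measure_pmf (P n))"
    if n: "n \<ge> 1" for n
  proof -
    have int: "integrable (measure_pmf (P n)) (Zf n)" using hB[OF n] by blast
    have "(\<integral>\<^sup>+ z. ennreal \<bar>Zf n z\<bar> \<partial>measure_pmf (P n)) = ennreal (\<integral>w. \<bar>Zf n w\<bar> \<partial>measure_pmf (P n))"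
      using int by (intro nn_integral_eq_integral) auto
    also have "(\<integral>w. \<bar>Zf n w\<bar> \<partial>measure_pmf (P n)) = (\<integral>w. Zf n w \<partial>measure_pmf (P n))"
      using ZAE[of n] by (intro integral_cong_AE) auto
    finally show "(\<integral>\<^sup>+ z. ennreal \<bar>Zf n z\<bar> \<partial>measure_pmf (P n)) = ennreal (\<integral>w. Zf n w \<partial>measure_pmf (P n))" .
    show "0 \<le> (\<integral>w. Zf n w \<partial>measure_pmf (P n))"
      using ZAE[of n] by (intro integral_nonneg_AE) auto
  qed
  have KSn: "ennreal eps * (\<integral>\<^sup>+ z. ennreal (Hf n z) * indicator S (fst z) \<partial>measure_pmf (P n))
    \<le> (\<integral>\<^sup>+ z. ennreal (\<bar>Zf n z\<bar> * indicator S (fst z)) \<partial>measure_pmf (P n))" for n S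
    using KS[OF eps, of "1 / real n" P n S] by (simp add: Hf_def Zf_def)
  have bound1: "ennreal eps * (\<integral>\<^sup>+ z. ennreal (Hf n z) \<partial>measure_pmf (P n)) \<le> ennreal (\<integral>w. Zf n w \<partial>measure_pmf (P n))"
    if n: "n \<ge> 1" for n
    using KSn[of n UNIV] Zint[OF n] by simp
  have fin: "(\<integral>\<^sup>+ z. ennreal (Hf n z) \<partial>measure_pmf (P n)) < \<top>" if n: "n \<ge> 1" for n
  proof -
    have "ennreal eps * (\<integral>\<^sup>+ z. ennreal (Hf n z) \<partial>measure_pmf (P n)) \<noteq> \<top>"
      using bound1[OF n] by (metis ennreal_neq_top neq_top_trans)
    thus ?thesis using eps by (simp add: ennreal_mult_eq_top_iff top.not_eq_extremum)
  qed
  show ?thesis unfolding condW_def eqH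
  proof (intro conjI)
    show "\<exists>B. \<forall>n\<ge>1. integrable (measure_pmf (P n)) (Hf n) \<and> (\<integral>w. Hf n w \<partial>measure_pmf (P n)) < B"
    proof (intro exI[of _ "Bd / eps"] allI impI conjI)
      fix n :: nat assume n: "1 \<le> n"
      show "integrable (measure_pmf (P n)) (Hf n)"
        using fin[OF n] Hnn by (intro integrableI_nonneg) auto
      obtain x0 where x0: "0 \<le> x0" "(\<integral>\<^sup>+ z. ennreal (Hf n z) \<partial>measure_pmf (P n)) = ennreal x0"
        using fin[OF n] by (cases "(\<integral>\<^sup>+ z. ennreal (Hf n z) \<partial>measure_pmf (P n))" rule: ennreal_cases) auto
      have "(\<integral>w. Hf n w \<partial>measure_pmf (P n)) = enn2real (\<integral>\<^sup>+ z. ennreal (Hf n z) \<partial>measure_pmf (P n))"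
        using Hnn by (intro integral_eq_nn_integral) auto
      hence I: "(\<integral>w. Hf n w \<partial>measure_pmf (P n)) = x0" using x0 by simp
      have "ennreal (eps * x0) \<le> ennreal (\<integral>w. Zf n w \<partial>measure_pmf (P n))"
        using bound1[OF n] x0 eps by (simp add: ennreal_mult)
      hence "eps * x0 \<le> (\<integral>w. Zf n w \<partial>measure_pmf (P n))" using Zint0[OF n] by (simp add: ennreal_le_iff)
      also have "\<dots> < Bd" using hB[OF n] by blast
      finally show "(\<integral>w. Hf n w \<partial>measure_pmf (P n)) < Bd / eps"
        using eps by (simp add: I pos_less_divide_eq mult.commute)
    qed
  next
    show "\<forall>A. (\<forall>n\<ge>1. A n \<in> sets (measure_pmf (P n))) \<longrightarrow>
      (\<lambda>n. measure (measure_pmf (P n)) (A n)) \<longlonglongrightarrow> 0 \<longrightarrow>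
      (\<lambda>n. \<integral>w. \<bar>Hf n w\<bar> * indicator (A n) w \<partial>measure_pmf (P n)) \<longlonglongrightarrow> 0"
    proof (intro allI impI)
      fix A :: "nat \<Rightarrow> ('a list \<times> 'b list) set"
      assume Alim: "(\<lambda>n. measure (measure_pmf (P n)) (A n)) \<longlonglongrightarrow> 0"
      show "(\<lambda>n. \<integral>w. \<bar>Hf n w\<bar> * indicator (A n) w \<partial>measure_pmf (P n)) \<longlonglongrightarrow> 0"
      proof (rule LIMSEQ_I)
        fix r :: real assume r: "0 < r"
        have Bdpos: "0 < Bd" using hB[of 1] Zint0[of 1] by force
        define \<delta> where "\<delta> = eps * r / (4 * Bd)"
        have dpos: "0 < \<delta>" using eps r Bdpos by (simp add: \<delta>_def)
        define Bs where "Bs n = {x. ennreal \<delta> * ennreal (PX P n x) < qA P n (A n) x}" for n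
        define C :: "nat \<Rightarrow> ('a list \<times> 'b list) set" where "C n = fst -` Bs n" for n
        have mCle: "measure (measure_pmf (P n)) (C n) \<le> measure (measure_pmf (P n)) (A n) / \<delta>" for n
        proof -
          have "ennreal \<delta> * emeasure (measure_pmf (P n)) (C n) \<le> emeasure (measure_pmf (P n)) (A n)"
            unfolding C_def Bs_def by (rule markov_lemma[OF dpos])
          hence "ennreal (\<delta> * measure (measure_pmf (P n)) (C n)) \<le> ennreal (measure (measure_pmf (P n)) (A n))"
            using dpos by (simp add: measure_pmf.emeasure_eq_measure ennreal_mult)
          hence "\<delta> * measure (measure_pmf (P n)) (C n) \<le> measure (measure_pmf (P n)) (A n)"
            by (simp add: ennreal_le_iff)
          thus ?thesis using dpos by (simp add: pos_le_divide_eq mult.commute)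
        qed
        have mC: "(\<lambda>n. measure (measure_pmf (P n)) (C n)) \<longlonglongrightarrow> 0"
        proof (rule tendsto_sandwich[of "\<lambda>_. 0" _ _ "\<lambda>n. measure (measure_pmf (P n)) (A n) / \<delta>"])
          show "(\<lambda>n. measure (measure_pmf (P n)) (A n) / \<delta>) \<longlonglongrightarrow> 0"
            using tendsto_divide_zero[OF Alim, of \<delta>] by simp
        qed (auto simp: mCle)
        have dlim: "(\<lambda>n. \<integral>w. \<bar>Zf n w\<bar> * indicator (C n) w \<partial>measure_pmf (P n)) \<longlonglongrightarrow> 0"
          using hA[of C] mC by simp
        have "eps * r / 2 > 0" using eps r by simp
        from LIMSEQ_D[OF dlim this] obtain N where
          N: "\<And>n. n \<ge> N \<Longrightarrow> norm ((\<integral>w. \<bar>Zf n w\<bar> * indicator (C n) w \<partial>measure_pmf (P n)) - 0) < eps * r / 2"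
          by blast
        show "\<exists>no. \<forall>n\<ge>no. norm ((\<integral>w. \<bar>Hf n w\<bar> * indicator (A n) w \<partial>measure_pmf (P n)) - 0) < r"
        proof (intro exI[of _ "max N 1"] allI impI)
          fix n assume "max N 1 \<le> n"
          hence nN: "n \<ge> N" and n: "n \<ge> 1" by auto
          define X where "X = (\<integral>\<^sup>+ z. ennreal (Hf n z) * indicator (A n) z \<partial>measure_pmf (P n))"
          define J where "J = (\<integral>\<^sup>+ z. ennreal (\<bar>Zf n z\<bar> * indicator (Bs n) (fst z)) \<partial>measure_pmf (P n))"
          define d where "d = (\<integral>w. \<bar>Zf n w\<bar> * indicator (C n) w \<partial>measure_pmf (P n))"
          have IX: "(\<integral>w. \<bar>Hf n w\<bar> * indicator (A n) w \<partial>measure_pmf (P n)) = enn2real X"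
          proof -
            have "(\<integral>w. \<bar>Hf n w\<bar> * indicator (A n) w \<partial>measure_pmf (P n)) =
                enn2real (\<integral>\<^sup>+ w. ennreal (\<bar>Hf n w\<bar> * indicator (A n) w) \<partial>measure_pmf (P n))"
              by (intro integral_eq_nn_integral) auto
            also have "(\<integral>\<^sup>+ w. ennreal (\<bar>Hf n w\<bar> * indicator (A n) w) \<partial>measure_pmf (P n)) = X"
              unfolding X_def using Hnn by (intro nn_integral_cong) (auto simp: indicator_def)
            finally show ?thesis .
          qed
          have Jd: "J = ennreal d"
          proof -
            have "J = (\<integral>\<^sup>+ w. ennreal (\<bar>Zf n w\<bar> * indicator (C n) w) \<partial>measure_pmf (P n))"
              unfolding J_def C_def by (intro nn_integral_cong) (auto simp: indicator_def)
            moreover have "d = enn2real (\<integral>\<^sup>+ w. ennreal (\<bar>Zf n w\<bar> * indicator (C n) w) \<partial>measure_pmf (P n))"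
              unfolding d_def by (intro integral_eq_nn_integral) auto
            moreover have "J \<le> (\<integral>\<^sup>+ z. ennreal \<bar>Zf n z\<bar> \<partial>measure_pmf (P n))"
              unfolding J_def by (intro nn_integral_mono ennreal_leI) (auto simp: indicator_def)
            hence "J \<noteq> \<top>" using Zint[OF n] by (metis ennreal_neq_top neq_top_trans)
            ultimately show ?thesis by (metis ennreal_enn2real less_top)
          qed
          have dN: "d < eps * r / 2" using N[OF nN] unfolding d_def by simp
          define g where "g x = ennreal (1 / real n * hbar P eps n x)" for x
          have Hg: "ennreal (Hf n z) = g (fst z)" for z by (simp add: Hf_def g_def)
          have "ennreal eps * X \<le> ennreal eps * ((\<integral>\<^sup>+ z. g (fst z) * indicator (Bs n) (fst z) \<partial>measure_pmf (P n)) +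
               ennreal \<delta> * (\<integral>\<^sup>+ z. g (fst z) \<partial>measure_pmf (P n)))"
            unfolding X_def Hg Bs_def by (intro mult_left_mono split_lemma dpos) simp
          also have "\<dots> = ennreal eps * (\<integral>\<^sup>+ z. ennreal (Hf n z) * indicator (Bs n) (fst z) \<partial>measure_pmf (P n)) +
               ennreal \<delta> * (ennreal eps * (\<integral>\<^sup>+ z. ennreal (Hf n z) \<partial>measure_pmf (P n)))"
            by (simp add: Hg distrib_left mult_ac)
          also have "\<dots> \<le> J + ennreal \<delta> * ennreal (\<integral>w. Zf n w \<partial>measure_pmf (P n))"
            unfolding J_def by (intro add_mono KSn mult_left_mono bound1 n) simp
          also have "\<dots> \<le> ennreal d + ennreal (\<delta> * Bd)"
          proof -
            have "ennreal \<delta> * ennreal (\<integral>w. Zf n w \<partial>measure_pmf (P n)) = ennreal (\<delta> * (\<integral>w. Zf n w \<partial>measure_pmf (P n)))"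
              using dpos Zint0[OF n] by (simp add: ennreal_mult)
            also have "\<dots> \<le> ennreal (\<delta> * Bd)"
              using hB[OF n] dpos by (intro ennreal_leI mult_left_mono) auto
            finally show ?thesis using Jd by (intro add_mono) auto
          qed
          also have "\<dots> = ennreal (d + \<delta> * Bd)"
            using dpos Bdpos unfolding d_def by (simp add: ennreal_plus)
          finally have Xb: "ennreal eps * X \<le> ennreal (d + \<delta> * Bd)" .
          have Xfin: "X \<noteq> \<top>"
          proof
            assume "X = \<top>"
            hence "ennreal eps * X = \<top>" using eps by (simp add: ennreal_mult_top)
            thus False using Xb by (simp add: top_unique)
          qed
          obtain x0 where x0: "0 \<le> x0" "X = ennreal x0"
            using Xfin by (cases X rule: ennreal_cases) auto
          have "ennreal (eps * x0) \<le> ennreal (d + \<delta> * Bd)" using Xb x0 eps by (simp add: ennreal_mult)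
          moreover have "0 \<le> d" unfolding d_def by (intro integral_nonneg_AE) auto
          ultimately have "eps * x0 \<le> d + \<delta> * Bd" using dpos Bdpos
            by (metis ennreal_le_iff add_nonneg_nonneg less_imp_le mult_nonneg_nonneg)
          also have "\<delta> * Bd = eps * r / 4" using Bdpos by (simp add: \<delta>_def)
          finally have "eps * x0 < eps * r" using dN mult_pos_pos[OF eps r] by linarith
          hence "x0 < r" using eps by simp
          thus "norm ((\<integral>w. \<bar>Hf n w\<bar> * indicator (A n) w \<partial>measure_pmf (P n)) - 0) < r"
            using IX x0 by simp
        qed
      qed
    qed
  qed
qed

end
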